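(* Let $G$ be a finite group, $H,K\le G$, and $p,q$ primes. Then for the ideals $\mathcal{P}_{L,r}$ of $\mathrm{Gh}(\underline{A}_G)$: (i) $\mathcal{P}_{K,0}\subseteq\mathcal{P}_{H,0}$ if and only if $H\preccurlyeq_GK$; (ii) $\mathcal{P}_{H,0}\subseteq\mathcal{P}_{H,p}$ and $\mathcal{P}_{H,p}\not\subseteq\mathcal{P}_{K,0}$; (iii) $\mathcal{P}_{K,p}\subseteq\mathcal{P}_{H,q}$ if and only if $p=q$ and $H\preccurlyeq_GK$.
   Context: For $H\le G$, $\widetilde{A}(H)$ is the subring of $\prod_{I\le H}\mathbb{Z}$ of tuples $(a_I)_{I\le H}$ with $a_{hIh^{-1}}=a_I$ for $h\in H$; $\mathrm{Gh}(\underline{A}_G)$ is the $G$-Tambara functor with $\mathrm{Gh}(\underline{A}_G)(G/H)=\widetilde{A}(H)$ (restriction is projection onto components, transfer $\mathrm{tr}^K_H(a)_I=\sum_{kH\in K/H,\ I^k\le H}a_{I^k}$, norm $\mathrm{nm}^K_H(a)_I=\prod_{IgH\in I\backslash K/H}a_{I^g\cap H}$, conjugation $c_{g,H}(a)_J=a_{g^{-1}Jg}$). $I\preccurlyeq_G L$ means $I$ is conjugate in $G$ to a subgroup of $L$. For $L\le G$ and $r$ a prime or $0$, $\mathcal{P}_{L,r}$ is the ideal with $\mathcal{P}_{L,r}(G/M)=\widetilde{A}(M)\cap\prod_{I\le M}\delta_{L,r}(I)\mathbb{Z}$, where $\delta_{L,r}(I)=r$ if $I\preccurlyeq_GL$ and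 $1$ otherwise. *)

theory Defs
  imports "HOL-Algebra.Algebra" "HOL-Computational_Algebra.Primes"
begin

definition conj_sub :: "('a, 'b) monoid_scheme \<Rightarrow> 'a \<Rightarrow> 'a set \<Rightarrow> 'a set" where
  "conj_sub G g I = l_coset G g (r_coset G I (inv\<^bsub>G\<^esub> g))"

definition subconj :: "('a, 'b) monoid_scheme \<Rightarrow> 'a set \<Rightarrow> 'a set \<Rightarrow> bool" where
  "subconj G I L \<longleftrightarrow> (\<exists>g \<in> carrier G. conj_sub G g I \<subseteq> L)"

text \<open>The ring tilde-A(M): tuples (a_I) indexed by the subgroups I of M, constant on
  M-conjugacy classes. Tuples are represented as functions on sets, vanishing off the
  index set (so that equal tuples are equal functions).\<close>
definition Atilde :: "('a, 'b) monoid_scheme \<Rightarrow> 'a set \<Rightarrow> ('a set \<Rightarrow> int) set" where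
  "Atilde G M = {a. (\<forall>I. \<not> (subgroup I G \<and> I \<subseteq> M) \<longrightarrow> a I = 0) \<and>
      (\<forall>I h. subgroup I G \<and> I \<subseteq> M \<and> h \<in> M \<longrightarrow> a (conj_sub G h I) = a I)}"

definition delta :: "('a, 'b) monoid_scheme \<Rightarrow> 'a set \<Rightarrow> nat \<Rightarrow> 'a set \<Rightarrow> int" where
  "delta G L r I = (if subconj G I L then int r else 1)"

text \<open>The ideal P_{L,r} of Gh(A_G), evaluated at G/M.\<close>
definition Pideal :: "('a, 'b) monoid_scheme \<Rightarrow> 'a set \<Rightarrow> nat \<Rightarrow> 'a set \<Rightarrow> ('a set \<Rightarrow> int) set" where
  "Pideal G L r M = {a \<in> Atilde G M. \<forall>I. subgroup I G \<and> I \<subseteq> M \<longrightarrow> delta G L r I dvd a I}"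

definition ideal_incl :: "('a, 'b) monoid_scheme \<Rightarrow> ('a set \<Rightarrow> ('a set \<Rightarrow> int) set)
    \<Rightarrow> ('a set \<Rightarrow> ('a set \<Rightarrow> int) set) \<Rightarrow> bool" where
  "ideal_incl G P Q \<longleftrightarrow> (\<forall>M. subgroup M G \<longrightarrow> P M \<subseteq> Q M)"

end

theory Submission
  imports Defs
begin

lemma conj_sub_eq: "conj_sub G g I = (\<lambda>x. g \<otimes>\<^bsub>G\<^esub> (x \<otimes>\<^bsub>G\<^esub> inv\<^bsub>G\<^esub> g)) ` I"
  by (auto simp: conj_sub_def l_coset_def r_coset_def)

context group
begin

lemma conj_sub_self:
  assumes "subgroup M G" "h \<in> M"
  shows "conj_sub G h M = M"
proof -
  interpret M: subgroup M G by fact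
  have hc: "h \<in> carrier G" using assms(2) by simp
  have hi: "inv h \<in> M" using assms(2) by (rule M.m_inv_closed)
  show ?thesis
  proof
    show "conj_sub G h M \<subseteq> M" unfolding conj_sub_eq
      using assms(2) hi by (auto simp: M.m_closed)
  next
    show "M \<subseteq> conj_sub G h M" unfolding conj_sub_eq
    proof
      fix y assume y: "y \<in> M"
      have yc: "y \<in> carrier G" using y by simp
      have "inv h \<otimes> y \<otimes> h \<in> M" using assms(2) y hi by (simp add: M.m_closed)
      moreover have "y = h \<otimes> ((inv h \<otimes> y \<otimes> h) \<otimes> inv h)"
        using hc yc by (simp add: m_assoc flip: m_assoc[of h "inv h"])
      ultimately show "y \<in> (\<lambda>x. h \<otimes> (x \<otimes> inv h)) ` M" by blast
    qed
  qed
qed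

lemma conj_sub_top:
  assumes "subgroup M G" "h \<in> M" "I \<subseteq> M" "conj_sub G h I = M"
  shows "I = M"
proof -
  interpret M: subgroup M G by fact
  have hc: "h \<in> carrier G" using assms(2) by simp
  have hi: "inv h \<in> M" using assms(2) by (rule M.m_inv_closed)
  show ?thesis
  proof
    show "M \<subseteq> I"
    proof
      fix z assume z: "z \<in> M"
      have zc: "z \<in> carrier G" using z by simp
      have "h \<otimes> (z \<otimes> inv h) \<in> M" using assms(2) z hi by (simp add: M.m_closed)
      then have "h \<otimes> (z \<otimes> inv h) \<in> conj_sub G h I" using assms(4) by simp
      then obtain x where x: "x \<in> I" "h \<otimes> (z \<otimes> inv h) = h \<otimes> (x \<otimes> inv h)"
        unfolding conj_sub_eq by blast
      have xc: "x \<in> carrier G" using x assms(3) by auto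
      have "z \<otimes> inv h = x \<otimes> inv h" using x(2) hc zc xc by simp
      then have "z = x" using hc zc xc by simp
      then show "z \<in> I" using x by simp
    qed
  qed (rule assms)
qed

lemma subconj_refl:
  assumes "subgroup I G"
  shows "subconj G I I"
proof -
  have "conj_sub G \<one> I = I" using conj_sub_self[OF assms subgroup.one_closed[OF assms]] .
  then show ?thesis unfolding subconj_def by auto
qed

lemma subconj_trans:
  assumes "subgroup I G" "subconj G I H" "subconj G H K"
  shows "subconj G I K"
proof -
  obtain g where g: "g \<in> carrier G" "conj_sub G g I \<subseteq> H" using assms(2) subconj_def by metis
  obtain h where h: "h \<in> carrier G" "conj_sub G h H \<subseteq> K" using assms(3) subconj_def by metis
  have Ic: "I \<subseteq> carrier G" using assms(1) subgroup.subset by blast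
  have "conj_sub G (h \<otimes> g) I \<subseteq> K"
  proof
    fix y assume "y \<in> conj_sub G (h \<otimes> g) I"
    then obtain x where x: "x \<in> I" "y = (h \<otimes> g) \<otimes> (x \<otimes> inv (h \<otimes> g))"
      unfolding conj_sub_eq by blast
    have xc: "x \<in> carrier G" using x Ic by blast
    have "g \<otimes> (x \<otimes> inv g) \<in> H" using g x unfolding conj_sub_eq by blast
    then have "h \<otimes> ((g \<otimes> (x \<otimes> inv g)) \<otimes> inv h) \<in> K" using h unfolding conj_sub_eq by blast
    moreover have "y = h \<otimes> ((g \<otimes> (x \<otimes> inv g)) \<otimes> inv h)"
      using x(2) g h xc by (simp add: inv_mult_group m_assoc)
    ultimately show "y \<in> K" by simp
  qed
  then show ?thesis unfolding subconj_def using g h by blast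
qed

end

definition ind :: "'a set \<Rightarrow> int \<Rightarrow> 'a set \<Rightarrow> int" where
  "ind M c = (\<lambda>I. if I = M then c else 0)"

lemma ind_Atilde:
  assumes "group G" "subgroup M G"
  shows "ind M c \<in> Atilde G M"
  unfolding Atilde_def ind_def
proof (intro CollectI conjI allI impI)
  fix I assume "\<not> (subgroup I G \<and> I \<subseteq> M)"
  then show "(if I = M then c else 0) = 0" using assms by auto
next
  fix I h assume a: "subgroup I G \<and> I \<subseteq> M \<and> h \<in> M"
  show "(if conj_sub G h I = M then c else 0) = (if I = M then c else 0)"
    using group.conj_sub_top[OF assms, of h I] group.conj_sub_self[OF assms, of h] a by auto
qed

lemma ind_Pideal:
  assumes "group G" "subgroup M G"
  shows "ind M c \<in> Pideal G L r M \<longleftrightarrow> delta G L r M dvd c"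
  unfolding Pideal_def using ind_Atilde[OF assms] assms by (auto simp: ind_def)

lemma incl_intro:
  assumes "\<And>I x. subgroup I G \<Longrightarrow> delta G L r I dvd x \<Longrightarrow> delta G L' r' I dvd x"
  shows "ideal_incl G (Pideal G L r) (Pideal G L' r')"
  unfolding ideal_incl_def Pideal_def using assms by blast

theorem proposition4p3:
  fixes G :: "('a, 'b) monoid_scheme" and H K :: "'a set" and p q :: nat
  assumes "group G" and "finite (carrier G)"
    and "subgroup H G" and "subgroup K G"
    and "Factorial_Ring.prime p" and "Factorial_Ring.prime q"
  shows "(ideal_incl G (Pideal G K 0) (Pideal G H 0) \<longleftrightarrow> subconj G H K)
       \<and> (ideal_incl G (Pideal G H 0) (Pideal G H p) \<and> \<not> ideal_incl G (Pideal G H p) (Pideal G K 0))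
       \<and> (ideal_incl G (Pideal G K p) (Pideal G H q) \<longleftrightarrow> p = q \<and> subconj G H K)"
proof (intro conjI)
  have G: "group G" by fact
  have p0: "p \<noteq> 0" "p \<noteq> 1" using assms(5) by auto
  have q1: "q \<noteq> 1" using assms(6) by auto
  have HH: "subconj G H H" using group.subconj_refl[OF G assms(3)] .
  have KK: "subconj G K K" using group.subconj_refl[OF G assms(4)] .
  show "ideal_incl G (Pideal G K 0) (Pideal G H 0) \<longleftrightarrow> subconj G H K"
  proof
    assume inc: "ideal_incl G (Pideal G K 0) (Pideal G H 0)"
    show "subconj G H K"
    proof (rule ccontr)
      assume n: "\<not> subconj G H K"
      have "ind H 1 \<in> Pideal G K 0 H" using ind_Pideal[OF G assms(3)] n by (simp add: delta_def)
      then have "ind H 1 \<in> Pideal G H 0 H" using inc assms(3) unfolding ideal_incl_def by blast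
      then show False using ind_Pideal[OF G assms(3)] HH by (simp add: delta_def)
    qed
  next
    assume hk: "subconj G H K"
    show "ideal_incl G (Pideal G K 0) (Pideal G H 0)"
    proof (rule incl_intro)
      fix I x assume I: "subgroup I G" and d: "delta G K 0 I dvd x"
      show "delta G H 0 I dvd x"
      proof (cases "subconj G I H")
        case True
        then have "subconj G I K" using group.subconj_trans[OF G I True hk] by blast
        then show ?thesis using d True by (simp add: delta_def)
      qed (simp add: delta_def)
    qed
  qed
  show "ideal_incl G (Pideal G H 0) (Pideal G H p)"
    by (rule incl_intro) (simp add: delta_def split: if_splits)
  show "\<not> ideal_incl G (Pideal G H p) (Pideal G K 0)"
  proof
    assume inc: "ideal_incl G (Pideal G H p) (Pideal G K 0)"
    have "ind K (int p) \<in> Pideal G H p K" using ind_Pideal[OF G assms(4)] by (simp add: delta_def)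
    then have "ind K (int p) \<in> Pideal G K 0 K" using inc assms(4) unfolding ideal_incl_def by blast
    then show False using ind_Pideal[OF G assms(4)] KK p0 by (simp add: delta_def)
  qed
  show "ideal_incl G (Pideal G K p) (Pideal G H q) \<longleftrightarrow> p = q \<and> subconj G H K"
  proof
    assume inc: "ideal_incl G (Pideal G K p) (Pideal G H q)"
    have "ind H (delta G K p H) \<in> Pideal G K p H" using ind_Pideal[OF G assms(3)] by simp
    then have "ind H (delta G K p H) \<in> Pideal G H q H" using inc assms(3) unfolding ideal_incl_def by blast
    then have d: "int q dvd delta G K p H" using ind_Pideal[OF G assms(3)] HH by (simp add: delta_def)
    show "p = q \<and> subconj G H K"
    proof (cases "subconj G H K")
      case True
      then have "q dvd p" using d by (simp add: delta_def)
      then have "q = p" using assms(5,6) by (simp add: primes_dvd_imp_eq)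
      then show ?thesis using True by simp
    next
      case False
      then show ?thesis using d q1 by (simp add: delta_def)
    qed
  next
    assume hk: "p = q \<and> subconj G H K"
    show "ideal_incl G (Pideal G K p) (Pideal G H q)"
    proof (rule incl_intro)
      fix I x assume I: "subgroup I G" and d: "delta G K p I dvd x"
      show "delta G H q I dvd x"
      proof (cases "subconj G I H")
        case True
        then have "subconj G I K" using group.subconj_trans[OF G I True] hk by blast
        then show ?thesis using d True hk by (simp add: delta_def)
      qed (simp add: delta_def)
    qed
  qed
qed

end
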